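(* Let $(N,\langle\cdot,\cdot\rangle,\varphi)$ be a modified $H$-type group (see context), with $m=\dim\mathfrak v$. The scalar curvature of $N$ is constant and equal to $S=-\dfrac{m\xi}{4}$.
   Context: Let $N$ be a 2-step nilpotent real Lie group with Lie algebra $\mathfrak n$, Lie bracket $[\cdot,\cdot]$ and center $\mathfrak z$, endowed with a left-invariant pseudo-Riemannian metric $\langle\cdot,\cdot\rangle$ for which $\mathfrak z$ is nondegenerate. Put $\mathfrak v=\mathfrak z^\perp$. For $z\in\mathfrak z$ define $j(z)\in\mathrm{End}(\mathfrak v)$ by $\langle [x,y],z\rangle=\langle y,j(z)x\rangle$ for all $x,y\in\mathfrak v$. Given a quadratic form $\varphi$ on $\mathfrak z$, $(N,\langle\cdot,\cdot\rangle,\varphi)$ is a modified $H$-type group if $j(z)^2=-\varphi(z)\,\mathrm{Id}_{\mathfrak v}$ for all $z\in\mathfrak z$. With $\{z_1,\dots,z_p\}$ a pseudo-orthonormal basis of $\mathfrak z$, $\xi=\sum_{k}\langle z_k,z_k\rangle\varphi(z_k)$. *)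

theory Defs
  imports "HOL-Analysis.Analysis"
begin

text \<open>Lie algebra n modelled on real^'n; br is the Lie bracket, g the (pseudo-Riemannian)
  inner product at the identity, i.e. the left-invariant metric.\<close>

definition lie_algebra :: "(real^'n \<Rightarrow> real^'n \<Rightarrow> real^'n) \<Rightarrow> bool" where
  "lie_algebra br \<longleftrightarrow> bilinear br \<and> (\<forall>x. br x x = 0) \<and>
     (\<forall>x y w. br x (br y w) + br y (br w x) + br w (br x y) = 0)"

definition lie_center :: "(real^'n \<Rightarrow> real^'n \<Rightarrow> real^'n) \<Rightarrow> (real^'n) set" where
  "lie_center br = {x. \<forall>y. br x y = 0}"

definition two_step_nilpotent :: "(real^'n \<Rightarrow> real^'n \<Rightarrow> real^'n) \<Rightarrow> bool" where
  "two_step_nilpotent br \<longleftrightarrow> lie_algebra br \<and> (\<exists>x y. br x y \<noteq> 0) \<and>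
     (\<forall>x y w. br (br x y) w = 0)"

definition pseudo_metric :: "(real^'n \<Rightarrow> real^'n \<Rightarrow> real) \<Rightarrow> bool" where
  "pseudo_metric g \<longleftrightarrow> bilinear g \<and> (\<forall>x y. g x y = g y x) \<and>
     (\<forall>x. (\<forall>y. g x y = 0) \<longrightarrow> x = 0)"

definition nondegenerate_on :: "(real^'n \<Rightarrow> real^'n \<Rightarrow> real) \<Rightarrow> (real^'n) set \<Rightarrow> bool" where
  "nondegenerate_on g U \<longleftrightarrow> (\<forall>x\<in>U. (\<forall>y\<in>U. g x y = 0) \<longrightarrow> x = 0)"

definition orth_compl :: "(real^'n \<Rightarrow> real^'n \<Rightarrow> real) \<Rightarrow> (real^'n) set \<Rightarrow> (real^'n) set" where
  "orth_compl g U = {x. \<forall>u\<in>U. g x u = 0}"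

definition quadratic_form_on :: "(real^'n \<Rightarrow> real) \<Rightarrow> (real^'n) set \<Rightarrow> bool" where
  "quadratic_form_on \<phi> U \<longleftrightarrow> (\<exists>B. bilinear B \<and> (\<forall>x y. B x y = B y x) \<and> (\<forall>z\<in>U. \<phi> z = B z z))"

definition modified_H_type ::
  "(real^'n \<Rightarrow> real^'n \<Rightarrow> real^'n) \<Rightarrow> (real^'n \<Rightarrow> real^'n \<Rightarrow> real) \<Rightarrow> (real^'n \<Rightarrow> real) \<Rightarrow> bool" where
  "modified_H_type br g \<phi> \<longleftrightarrow>
     two_step_nilpotent br \<and> pseudo_metric g \<and> nondegenerate_on g (lie_center br) \<and>
     quadratic_form_on \<phi> (lie_center br) \<and>
     (\<exists>j :: real^'n \<Rightarrow> real^'n \<Rightarrow> real^'n.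
        \<forall>z\<in>lie_center br.
          (\<forall>x\<in>orth_compl g (lie_center br). j z x \<in> orth_compl g (lie_center br)) \<and>
          (\<forall>x\<in>orth_compl g (lie_center br). \<forall>y\<in>orth_compl g (lie_center br).
              g (br x y) z = g y (j z x)) \<and>
          (\<forall>x\<in>orth_compl g (lie_center br). j z (j z x) = - (\<phi> z) *\<^sub>R x))"

definition pseudo_orthonormal_basis ::
  "(real^'n \<Rightarrow> real^'n \<Rightarrow> real) \<Rightarrow> (real^'n) set \<Rightarrow> (real^'n) set \<Rightarrow> bool" where
  "pseudo_orthonormal_basis g U B \<longleftrightarrow> B \<subseteq> U \<and> independent B \<and> span B = U \<and>
     (\<forall>a\<in>B. \<forall>b\<in>B. a \<noteq> b \<longrightarrow> g a b = 0) \<and> (\<forall>a\<in>B. g a a = 1 \<or> g a a = -1)"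

text \<open>Levi-Civita connection of the left-invariant metric on left-invariant fields (Koszul formula).\<close>
definition levi_civita ::
  "(real^'n \<Rightarrow> real^'n \<Rightarrow> real^'n) \<Rightarrow> (real^'n \<Rightarrow> real^'n \<Rightarrow> real) \<Rightarrow> real^'n \<Rightarrow> real^'n \<Rightarrow> real^'n" where
  "levi_civita br g x y = (THE u. \<forall>w. 2 * g u w = g (br x y) w - g (br y w) x + g (br w x) y)"

definition curvature ::
  "(real^'n \<Rightarrow> real^'n \<Rightarrow> real^'n) \<Rightarrow> (real^'n \<Rightarrow> real^'n \<Rightarrow> real) \<Rightarrow> real^'n \<Rightarrow> real^'n \<Rightarrow> real^'n \<Rightarrow> real^'n" where
  "curvature br g x y w = levi_civita br g x (levi_civita br g y w) - levi_civita br g y (levi_civita br g x w)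
      - levi_civita br g (br x y) w"

definition lin_trace :: "(real^'n \<Rightarrow> real^'n) \<Rightarrow> real" where
  "lin_trace f = (\<Sum>i\<in>UNIV. f (axis i 1) $ i)"

definition ricci :: "(real^'n \<Rightarrow> real^'n \<Rightarrow> real^'n) \<Rightarrow> (real^'n \<Rightarrow> real^'n \<Rightarrow> real) \<Rightarrow> real^'n \<Rightarrow> real^'n \<Rightarrow> real" where
  "ricci br g y w = lin_trace (\<lambda>x. curvature br g x y w)"

definition ricci_operator :: "(real^'n \<Rightarrow> real^'n \<Rightarrow> real^'n) \<Rightarrow> (real^'n \<Rightarrow> real^'n \<Rightarrow> real) \<Rightarrow> real^'n \<Rightarrow> real^'n" where
  "ricci_operator br g y = (THE u. \<forall>w. g u w = ricci br g y w)"

text \<open>Scalar curvature of the left-invariant metric (constant on N by left-invariance).\<close>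
definition scalar_curvature :: "(real^'n \<Rightarrow> real^'n \<Rightarrow> real^'n) \<Rightarrow> (real^'n \<Rightarrow> real^'n \<Rightarrow> real) \<Rightarrow> real" where
  "scalar_curvature br g = lin_trace (ricci_operator br g)"

end

theory Submission
  imports Defs
begin

locale mht =
  fixes br :: "real^'n \<Rightarrow> real^'n \<Rightarrow> real^'n"
    and g :: "real^'n \<Rightarrow> real^'n \<Rightarrow> real"
    and \<phi> :: "real^'n \<Rightarrow> real"
    and Zb :: "(real^'n) set"
    and j :: "real^'n \<Rightarrow> real^'n \<Rightarrow> real^'n"
  assumes br_bil: "bilinear br" and br_self: "\<And>x. br x x = 0"
    and br_2: "\<And>x y w. br (br x y) w = 0"
    and g_bil: "bilinear g" and g_sym: "\<And>x y. g x y = g y x"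
    and g_nd: "\<And>x. (\<And>y. g x y = 0) \<Longrightarrow> x = 0"
    and Z_nd: "nondegenerate_on g (lie_center br)"
    and Zb_sub: "Zb \<subseteq> lie_center br" and Zb_ind: "independent Zb"
    and Zb_span: "span Zb = lie_center br"
    and Zb_orth: "\<And>a b. a \<in> Zb \<Longrightarrow> b \<in> Zb \<Longrightarrow> a \<noteq> b \<Longrightarrow> g a b = 0"
    and Zb_norm: "\<And>a. a \<in> Zb \<Longrightarrow> g a a = 1 \<or> g a a = -1"
    and j_V: "\<And>z x. z \<in> lie_center br \<Longrightarrow> x \<in> orth_compl g (lie_center br) \<Longrightarrow>
                 j z x \<in> orth_compl g (lie_center br)"
    and j_adj: "\<And>z x y. z \<in> lie_center br \<Longrightarrow> x \<in> orth_compl g (lie_center br) \<Longrightarrow>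
                 y \<in> orth_compl g (lie_center br) \<Longrightarrow> g (br x y) z = g y (j z x)"
    and j_sq: "\<And>z x. z \<in> lie_center br \<Longrightarrow> x \<in> orth_compl g (lie_center br) \<Longrightarrow>
                 j z (j z x) = - (\<phi> z) *\<^sub>R x"
begin

abbreviation "Z \<equiv> lie_center br"
abbreviation "V \<equiv> orth_compl g (lie_center br)"

lemma gl: "linear (\<lambda>x. g x y)" using g_bil by (simp add: bilinear_def)
lemma gr: "linear (g x)" using g_bil by (simp add: bilinear_def)
lemma bl: "linear (\<lambda>x. br x y)" using br_bil by (simp add: bilinear_def)
lemma brr: "linear (br x)" using br_bil by (simp add: bilinear_def)

lemma g_simps[simp]:
  "g (x + y) w = g x w + g y w" "g w (x + y) = g w x + g w y"
  "g (x - y) w = g x w - g y w" "g w (x - y) = g w x - g w y"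
  "g (c *\<^sub>R x) w = c * g x w" "g w (c *\<^sub>R x) = c * g w x"
  "g (- x) w = - g x w" "g w (- x) = - g w x"
  "g 0 w = 0" "g w 0 = 0"
  "g (sum f S) w = (\<Sum>i\<in>S. g (f i) w)" "g w (sum f S) = (\<Sum>i\<in>S. g w (f i))"
  using linear_add[OF gl] linear_add[OF gr] linear_diff[OF gl] linear_diff[OF gr]
    linear_scale[OF gl] linear_scale[OF gr] linear_neg[OF gl] linear_neg[OF gr]
    linear_0[OF gl] linear_0[OF gr] linear_sum[OF gl] linear_sum[OF gr]
  by simp_all

lemma br_simps[simp]:
  "br (x + y) w = br x w + br y w" "br w (x + y) = br w x + br w y"
  "br (x - y) w = br x w - br y w" "br w (x - y) = br w x - br w y"
  "br (c *\<^sub>R x) w = c *\<^sub>R br x w" "br w (c *\<^sub>R x) = c *\<^sub>R br w x"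
  "br (- x) w = - br x w" "br w (- x) = - br w x"
  "br 0 w = 0" "br w 0 = 0"
  "br (sum f S) w = (\<Sum>i\<in>S. br (f i) w)" "br w (sum f S) = (\<Sum>i\<in>S. br w (f i))"
  using linear_add[OF bl] linear_add[OF brr] linear_diff[OF bl] linear_diff[OF brr]
    linear_scale[OF bl] linear_scale[OF brr] linear_neg[OF bl] linear_neg[OF brr]
    linear_0[OF bl] linear_0[OF brr] linear_sum[OF bl] linear_sum[OF brr]
  by simp_all

lemma br_anti: "br y x = - br x y"
proof -
  have h: "br (x+y) (x+y) = br x x + br x y + (br y x + br y y)" by (simp only: br_simps(1,2) add_ac)
  have "br x y + br y x = 0" using h by (simp add: br_self)
  then show ?thesis by (simp add: eq_neg_iff_add_eq_0 add.commute)
qed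

lemma br_Z[simp]: "br x y \<in> Z" unfolding lie_center_def using br_2 by auto

lemma Z_iff: "z \<in> Z \<longleftrightarrow> (\<forall>y. br z y = 0)" unfolding lie_center_def by auto
lemma br_Z1[simp]: "z \<in> Z \<Longrightarrow> br z y = 0" by (simp add: Z_iff)
lemma br_Z2[simp]: "z \<in> Z \<Longrightarrow> br y z = 0" by (metis br_Z1 br_anti neg_equal_0_iff_equal)
lemma br_br2[simp]: "br w (br x y) = 0" by simp

lemma V_iff: "v \<in> V \<longleftrightarrow> (\<forall>z\<in>Z. g v z = 0)" unfolding orth_compl_def by auto
lemma gVZ[simp]: "v \<in> V \<Longrightarrow> z \<in> Z \<Longrightarrow> g v z = 0" by (simp add: V_iff)
lemma gZV[simp]: "v \<in> V \<Longrightarrow> z \<in> Z \<Longrightarrow> g z v = 0" by (simp add: V_iff g_sym)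

lemma Zb_Z[simp]: "b \<in> Zb \<Longrightarrow> b \<in> Z" using Zb_sub by auto
lemma Zb_fin[simp]: "finite Zb" using Zb_ind by (rule finiteI_independent)
lemma Zb_sq[simp]: "b \<in> Zb \<Longrightarrow> g b b * g b b = 1" using Zb_norm by fastforce

lemma Z_sub: "subspace Z" unfolding subspace_def Z_iff by simp
lemma V_sub: "subspace V" unfolding subspace_def V_iff by simp


definition P where "P x = (\<Sum>b\<in>Zb. (g b b * g x b) *\<^sub>R b)"
definition Q where "Q x = x - P x"

lemma P_simps[simp]: "P (x + y) = P x + P y" "P (c *\<^sub>R x) = c *\<^sub>R P x" "P (- x) = - P x"
  "P 0 = 0" "P (x - y) = P x - P y"
  by (simp_all add: P_def sum.distrib scaleR_sum_right algebra_simps sum_negf[symmetric]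
      sum_subtractf[symmetric])

lemma Q_simps[simp]: "Q (x + y) = Q x + Q y" "Q (c *\<^sub>R x) = c *\<^sub>R Q x" "Q (- x) = - Q x"
  "Q 0 = 0" "Q (x - y) = Q x - Q y"
  by (simp_all add: Q_def algebra_simps)

lemma PQ: "P x + Q x = x" by (simp add: Q_def)

lemma gPb: "b \<in> Zb \<Longrightarrow> g (P x) b = g x b"
proof -
  assume b: "b \<in> Zb"
  have "g (P x) b = (\<Sum>c\<in>Zb. g c c * g x c * g c b)" by (simp add: P_def)
  also have "\<dots> = (\<Sum>c\<in>Zb. if c = b then g b b * g x b * g b b else 0)"
    using b by (intro sum.cong) (auto simp: Zb_orth)
  also have "\<dots> = g x b" using b by (simp add: mult.commute mult.left_commute)
  finally show ?thesis .
qed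

lemma gQb: "b \<in> Zb \<Longrightarrow> g (Q x) b = 0" by (simp add: Q_def gPb)

lemma P_Z[simp]: "P x \<in> Z" unfolding Z_iff P_def by simp

lemma Q_V[simp]: "Q x \<in> V"
  unfolding V_iff
proof
  fix z assume "z \<in> Z"
  then have "z \<in> span Zb" by (simp add: Zb_span)
  then show "g (Q x) z = 0"
    by (induct rule: span_induct_alt) (auto simp: gQb)
qed

lemma P_V: "v \<in> V \<Longrightarrow> P v = 0" by (simp add: P_def)
lemma Q_V_id: "v \<in> V \<Longrightarrow> Q v = v" by (simp add: Q_def P_V)

lemma Q_Z: "z \<in> Z \<Longrightarrow> Q z = 0"
proof -
  assume z: "z \<in> Z"
  have "Q z \<in> Z" unfolding Q_def using z P_Z Z_sub by (simp add: subspace_diff)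
  moreover have "\<forall>y\<in>Z. g (Q z) y = 0" using Q_V by (simp add: V_iff)
  ultimately show ?thesis using Z_nd unfolding nondegenerate_on_def by blast
qed
lemma P_Z_id: "z \<in> Z \<Longrightarrow> P z = z" using Q_Z by (simp add: Q_def)

lemma PP[simp]: "P (P x) = P x" by (simp add: P_Z_id)
lemma QQ[simp]: "Q (Q x) = Q x" by (simp add: Q_V_id)
lemma PQ0[simp]: "P (Q x) = 0" by (simp add: P_V)
lemma QP0[simp]: "Q (P x) = 0" by (simp add: Q_Z)

lemma gZQ[simp]: "c \<in> Z \<Longrightarrow> g c (Q y) = 0" "c \<in> Z \<Longrightarrow> g (Q y) c = 0" by simp_all
lemma gZ_P: "c \<in> Z \<Longrightarrow> g c y = g c (P y)"
  by (metis PQ add_0_right gZQ(1) g_simps(2))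
lemma br_Q: "br x y = br (Q x) (Q y)"
proof -
  have "br x y = br (P x + Q x) (P y + Q y)" by (simp add: PQ)
  then show ?thesis by simp
qed

lemma gZZ: "c \<in> Z \<Longrightarrow> g c c' = (\<Sum>b\<in>Zb. g b b * g c b * g c' b)"
  by (subst gZ_P, simp) (simp add: P_def algebra_simps sum_distrib_left)

lemma expand: "v = (\<Sum>k\<in>UNIV. (v $ k) *\<^sub>R axis k (1::real))"
  using basis_expansion[of v] by (simp add: scalar_mult_eq_scaleR)

lemma g_nd2: "(\<And>k. g x (axis k 1) = 0) \<Longrightarrow> x = 0"
proof (rule g_nd)
  fix y assume "\<And>k. g x (axis k 1) = 0"
  then show "g x y = 0" by (subst expand[of y]) simp
qed

definition Gv :: "real^'n \<Rightarrow> real^'n" where "Gv x = (\<chi> k. g x (axis k 1))"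

lemma Gv_lin: "linear Gv"
  by (rule linearI) (simp_all add: Gv_def vec_eq_iff)

lemma Gv_inj: "inj Gv"
proof (rule injI)
  fix x y assume "Gv x = Gv y"
  then have "\<And>k. g (x - y) (axis k 1) = 0" by (simp add: Gv_def vec_eq_iff)
  then show "x = y" using g_nd2 by fastforce
qed

lemma Gv_surj: "surj Gv"
  using Gv_lin Gv_inj by (rule linear_injective_imp_surjective) simp

definition d :: "'n \<Rightarrow> real^'n" where "d i = inv Gv (axis i 1)"

lemma g_axis_d: "g (axis k 1) (d i) = (if k = i then 1 else 0)"
proof -
  have "Gv (d i) = axis i 1" unfolding d_def using Gv_surj by (simp add: surj_f_inv_f)
  then have "g (d i) (axis k 1) = axis i 1 $ k" by (metis Gv_def vec_lambda_beta)
  then show ?thesis by (simp add: g_sym axis_def)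
qed

lemma g_d: "g v (d i) = v $ i"
  by (subst expand[of v]) (simp add: g_axis_d if_distrib cong: if_cong)

lemma g_d': "g (d i) v = v $ i" by (simp add: g_sym g_d)


lemma gV_Q: "v \<in> V \<Longrightarrow> g v (Q u) = g v u"
  by (metis PQ P_Z add_0_left gVZ g_simps(2))
lemma gQ_sym: "g (Q x) y = g (Q y) x"
  by (metis Q_V gV_Q g_sym)

definition A where "A a x = j (P a) (Q x)"

lemma A_V[simp]: "A a x \<in> V" unfolding A_def by (rule j_V) simp_all

lemma A_char: "g (A a x) y = g (br x y) a"
proof -
  have "g (A a x) y = g (A a x) (Q y)" by (simp add: gV_Q)
  also have "\<dots> = g (Q y) (j (P a) (Q x))" by (simp add: A_def g_sym)
  also have "\<dots> = g (br (Q x) (Q y)) (P a)" by (simp add: j_adj)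
  also have "\<dots> = g (br x y) a" by (simp add: br_Q[symmetric] gZ_P[symmetric])
  finally show ?thesis .
qed

lemma A_eqI: "(\<And>y. g u y = g (br x y) a) \<Longrightarrow> A a x = u"
proof -
  assume h: "\<And>y. g u y = g (br x y) a"
  have "A a x - u = 0" by (rule g_nd) (simp add: A_char h)
  then show ?thesis by simp
qed

lemma A_simps[simp]:
  "A (a + b) x = A a x + A b x" "A x (a + b) = A x a + A x b"
  "A (a - b) x = A a x - A b x" "A x (a - b) = A x a - A x b"
  "A (c *\<^sub>R a) x = c *\<^sub>R A a x" "A x (c *\<^sub>R a) = c *\<^sub>R A x a"
  "A (- a) x = - A a x" "A x (- a) = - A x a"
  "A 0 x = 0" "A x 0 = 0"
  by (rule A_eqI; simp add: A_char)+

lemma A_Vzero[simp]: "v \<in> V \<Longrightarrow> A v x = 0" by (rule A_eqI) simp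
lemma A_Zzero[simp]: "z \<in> Z \<Longrightarrow> A a z = 0" by (rule A_eqI) simp
lemma A_Q1[simp]: "A (Q a) x = 0" by simp
lemma A_br2[simp]: "A a (br x y) = 0" by simp
lemma A_A1[simp]: "A (A a x) y = 0" by simp
lemma A_skew: "g (A a x) y = - g (A a y) x"
  by (simp add: A_char br_anti[of x y])

lemma A_sq: "b \<in> Zb \<Longrightarrow> A b (A b x) = - \<phi> b *\<^sub>R Q x"
proof -
  assume b: "b \<in> Zb"
  have "A b (A b x) = j b (j b (Q x))"
    unfolding A_def using b P_Z_id[of b] Q_V_id[of "j b (Q x)"] j_V[of b "Q x"] by simp
  then show ?thesis using b j_sq[of b "Q x"] by simp
qed

lemma gA2: "b \<in> Zb \<Longrightarrow> g (A b x) (A b y) = \<phi> b * g (Q x) y"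
  by (simp add: A_skew[of b x] A_sq gQ_sym[of y x])

definition L where "L x y = (1/2) *\<^sub>R br x y - (1/2) *\<^sub>R (A x y + A y x)"

lemma LC: "levi_civita br g x y = L x y"
  unfolding levi_civita_def
proof (rule the_equality)
  show "\<forall>w. 2 * g (L x y) w = g (br x y) w - g (br y w) x + g (br w x) y"
    by (simp add: L_def A_char br_anti[of _ x] algebra_simps)
next
  fix u assume h: "\<forall>w. 2 * g u w = g (br x y) w - g (br y w) x + g (br w x) y"
  have "u - L x y = 0"
  proof (rule g_nd)
    fix w show "g (u - L x y) w = 0" using h
      by (simp add: L_def A_char br_anti[of _ x] algebra_simps)
  qed
  then show "u = L x y" by simp
qed

definition Rf where "Rf x y w =
  (-(1/4)) *\<^sub>R A (br y w) x - (1/4) *\<^sub>R br x (A y w) + (1/4) *\<^sub>R A x (A y w)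
  - (1/4) *\<^sub>R br x (A w y) + (1/4) *\<^sub>R A x (A w y)
  + (1/4) *\<^sub>R A (br x w) y + (1/4) *\<^sub>R br y (A x w) - (1/4) *\<^sub>R A y (A x w)
  + (1/4) *\<^sub>R br y (A w x) - (1/4) *\<^sub>R A y (A w x) + (1/2) *\<^sub>R A (br x y) w"

lemma curv: "curvature br g x y w = Rf x y w"
  unfolding curvature_def LC by (simp add: L_def Rf_def algebra_simps)


definition C :: "(real^'n \<Rightarrow> real^'n \<Rightarrow> real) \<Rightarrow> real" where
  "C B = (\<Sum>i\<in>UNIV. B (axis i 1) (d i))"

lemma C_add[simp]: "C (\<lambda>x u. B1 x u + B2 x u) = C B1 + C B2" by (simp add: C_def sum.distrib)
lemma C_diff[simp]: "C (\<lambda>x u. B1 x u - B2 x u) = C B1 - C B2" by (simp add: C_def sum_subtractf)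
lemma C_scale[simp]: "C (\<lambda>x u. c * B x u) = c * C B" by (simp add: C_def sum_distrib_left)
lemma C_neg[simp]: "C (\<lambda>x u. - B x u) = - C B" by (simp add: C_def sum_negf)
lemma C_zero[simp]: "C (\<lambda>x u. 0) = 0" by (simp add: C_def)
lemma C_sum[simp]: "C (\<lambda>x u. \<Sum>k\<in>S. B k x u) = (\<Sum>k\<in>S. C (B k))"
  by (simp add: C_def sum.swap[of _ S])

lemma bilI:
  assumes "\<And>x y u. B (x + y) u = B x u + B y u" "\<And>c x u. B (c *\<^sub>R x) u = c * B x u"
    "\<And>x u v. B x (u + v) = B x u + B x v" "\<And>c x u. B x (c *\<^sub>R u) = c * B x u"
  shows "bilinear B"
  unfolding bilinear_def using assms by (auto intro!: linearI)

lemma C_trace: "lin_trace f = C (\<lambda>x u. g (f x) u)"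
  by (simp add: lin_trace_def C_def g_d)

lemma dual_exp: "(\<Sum>i\<in>UNIV. g (axis i 1) a *\<^sub>R d i) = a"
proof -
  have "(\<Sum>i\<in>UNIV. g (axis i 1) a *\<^sub>R d i) - a = 0"
  proof (rule g_nd)
    fix y
    have "(\<Sum>i\<in>UNIV. g (axis i 1) a * g (d i) y) = (\<Sum>i\<in>UNIV. y $ i * g (axis i 1) a)"
      by (simp add: g_d' mult.commute)
    also have "\<dots> = g y a" by (subst (2) expand[of y]) simp
    finally show "g ((\<Sum>i\<in>UNIV. g (axis i 1) a *\<^sub>R d i) - a) y = 0" by (simp add: g_sym)
  qed
  then show ?thesis by simp
qed

lemma C_rank1: "linear F \<Longrightarrow> C (\<lambda>x u. g x a * F u) = F a"
proof -
  assume F: "linear F"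
  have "C (\<lambda>x u. g x a * F u) = F (\<Sum>i\<in>UNIV. g (axis i 1) a *\<^sub>R d i)"
    unfolding C_def by (simp add: linear_sum[OF F] linear_scale[OF F])
  then show ?thesis by (simp add: dual_exp)
qed

lemma C_rank1': "linear F \<Longrightarrow> C (\<lambda>x u. F x * g u a) = F a"
proof -
  assume F: "linear F"
  have "C (\<lambda>x u. F x * g u a) = F (\<Sum>i\<in>UNIV. (a $ i) *\<^sub>R axis i 1)"
    unfolding C_def by (simp add: linear_sum[OF F] linear_scale[OF F] g_d' mult.commute)
  then show ?thesis by (simp add: expand[symmetric])
qed

lemma C_sym: "bilinear B \<Longrightarrow> C B = C (\<lambda>x u. B u x)"
proof -
  assume B: "bilinear B"
  have l1: "linear (\<lambda>x. B x u)" for u using B by (simp add: bilinear_def)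
  have l2: "linear (B x)" for x using B by (simp add: bilinear_def)
  have e1: "B (axis i 1) (d i) = (\<Sum>k\<in>UNIV. g (d i) (d k) * B (axis i 1) (axis k 1))" for i
    by (subst expand[of "d i"]) (simp add: linear_sum[OF l2] linear_scale[OF l2] g_d)
  have e2: "B (d i) (axis i 1) = (\<Sum>k\<in>UNIV. g (d i) (d k) * B (axis k 1) (axis i 1))" for i
    by (subst expand[of "d i"]) (simp add: linear_sum[OF l1] linear_scale[OF l1] g_d)
  have "C B = (\<Sum>i\<in>UNIV. \<Sum>k\<in>UNIV. g (d i) (d k) * B (axis i 1) (axis k 1))"
    unfolding C_def e1 ..
  also have "\<dots> = (\<Sum>k\<in>UNIV. \<Sum>i\<in>UNIV. g (d i) (d k) * B (axis i 1) (axis k 1))"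
    by (rule sum.swap)
  also have "\<dots> = (\<Sum>k\<in>UNIV. \<Sum>i\<in>UNIV. g (d k) (d i) * B (axis i 1) (axis k 1))"
    by (simp add: g_sym)
  also have "\<dots> = C (\<lambda>x u. B u x)" unfolding C_def e2 ..
  finally show ?thesis .
qed

lemma C_skew: "bilinear B \<Longrightarrow> (\<And>x u. B u x = - B x u) \<Longrightarrow> C B = 0"
proof -
  assume B: "bilinear B" and s: "\<And>x u. B u x = - B x u"
  have "(\<lambda>x u. B u x) = (\<lambda>x u. - B x u)" by (rule ext, rule ext, rule s)
  then have "C B = C (\<lambda>x u. - B x u)" using C_sym[OF B] by simp
  then show ?thesis by simp
qed

lemma C_decomp: "bilinear B \<Longrightarrow> C B = (\<Sum>b\<in>Zb. g b b * B b b) + C (\<lambda>x u. B (Q x) (Q u))"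
proof -
  assume B: "bilinear B"
  have l1: "linear (\<lambda>x. B x u)" for u using B by (simp add: bilinear_def)
  have l2: "linear (B x)" for x using B by (simp add: bilinear_def)
  have lQ: "linear (\<lambda>x. B (Q x) u)" for u
    by (rule linearI) (simp_all add: linear_add[OF l1] linear_scale[OF l1])
  have s1: "B x u = B (P x) u + B (Q x) (P u) + B (Q x) (Q u)" for x u
  proof -
    have "B x u = B (P x) u + B (Q x) (P u + Q u)" by (metis PQ linear_add[OF l1])
    then show ?thesis by (simp add: linear_add[OF l2])
  qed
  have p1: "B (P x) u = (\<Sum>b\<in>Zb. g b b * (g x b * B b u))" for x u
    unfolding P_def by (simp add: linear_sum[OF l1] linear_scale[OF l1] mult.assoc)
  have p2: "B (Q x) (P u) = (\<Sum>b\<in>Zb. g b b * (B (Q x) b * g u b))" for x u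
    unfolding P_def by (simp add: linear_sum[OF l2] linear_scale[OF l2] mult_ac)
  have "C B = C (\<lambda>x u. (\<Sum>b\<in>Zb. g b b * (g x b * B b u)) + (\<Sum>b\<in>Zb. g b b * (B (Q x) b * g u b))
     + B (Q x) (Q u))"
    by (subst s1[abs_def]) (simp only: p1 p2)
  also have "\<dots> = (\<Sum>b\<in>Zb. g b b * B b b) + (\<Sum>b\<in>Zb. g b b * B (Q b) b) + C (\<lambda>x u. B (Q x) (Q u))"
    by (simp add: C_rank1[OF l2] C_rank1'[OF lQ])
  also have "(\<Sum>b\<in>Zb. g b b * B (Q b) b) = 0"
    by (simp add: Q_Z linear_0[OF l1])
  finally show ?thesis by simp
qed



definition "\<xi> = (\<Sum>b\<in>Zb. g b b * \<phi> b)"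

lemma bil_gF: "linear F \<Longrightarrow> bilinear (\<lambda>x u. g (F x) u)"
  by (rule bilI) (simp_all add: linear_add linear_scale)

lemma decF: "linear F \<Longrightarrow>
  C (\<lambda>x u. g (F x) u) = (\<Sum>b\<in>Zb. g b b * g (F b) b) + C (\<lambda>x u. g (F (Q x)) (Q u))"
  by (rule C_decomp[OF bil_gF])

lemma T1: "C (\<lambda>x u. g (br x a) u) = 0"
proof -
  have "linear (\<lambda>x. br x a)" by (rule linearI) simp_all
  from decF[OF this] show ?thesis by simp
qed

lemma T3: "C (\<lambda>x u. g (A x a) u) = 0"
proof -
  have "linear (\<lambda>x. A x a)" by (rule linearI) simp_all
  from decF[OF this] show ?thesis by simp
qed

lemma T5: "C (\<lambda>x u. g (A c x) u) = 0"
proof -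
  have "linear (\<lambda>x. A c x)" by (rule linearI) simp_all
  from C_skew[OF bil_gF[OF this]] show ?thesis using A_skew by blast
qed

lemma T7: "C (\<lambda>x u. g (br y (A w x)) u) = 0"
proof -
  have "linear (\<lambda>x. br y (A w x))" by (rule linearI) simp_all
  from decF[OF this] show ?thesis by simp
qed

lemma T8: "C (\<lambda>x u. g (A y (A x w)) u) = 0"
proof -
  have "linear (\<lambda>x. A y (A x w))" by (rule linearI) simp_all
  from decF[OF this] show ?thesis by simp
qed

lemma T6: "C (\<lambda>x u. g (br y (A x w)) u) = \<xi> * g (Q y) w"
proof -
  have "linear (\<lambda>x. br y (A x w))" by (rule linearI) simp_all
  from decF[OF this] have "C (\<lambda>x u. g (br y (A x w)) u) = (\<Sum>b\<in>Zb. g b b * g (br y (A b w)) b)"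
    by simp
  also have "\<dots> = (\<Sum>b\<in>Zb. g b b * \<phi> b * g (Q y) w)"
    by (rule sum.cong) (simp_all add: A_char[symmetric] gA2)
  finally show ?thesis by (simp add: \<xi>_def sum_distrib_right)
qed

lemma T10: "C (\<lambda>x u. g (A (br x a) c) u) = - \<xi> * g (Q a) c"
proof -
  have lin: "linear (\<lambda>x. A (br x a) c)" by (rule linearI) simp_all
  have pw: "g (A (br (Q x) a) c) (Q u) = - (\<Sum>b\<in>Zb. g b b * (g x (A b a) * g u (A b c)))" for x u
  proof -
    have "g (A (br (Q x) a) c) (Q u) = g (br c (Q u)) (br (Q x) a)" by (simp add: A_char)
    also have "\<dots> = (\<Sum>b\<in>Zb. g b b * g (br c (Q u)) b * g (br (Q x) a) b)" by (rule gZZ) simp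
    also have "\<dots> = (\<Sum>b\<in>Zb. g b b * g (A b c) u * (- g x (A b a)))"
      by (rule sum.cong) (simp_all add: A_char[symmetric] gV_Q A_skew[of _ "Q x"] g_sym[of x])
    finally show ?thesis by (simp add: sum_negf[symmetric] g_sym[of u] mult_ac)
  qed
  have r1: "C (\<lambda>x u. g x (A b a) * g u (A b c)) = g (A b a) (A b c)" for b
    by (rule C_rank1) (rule linearI, simp_all)
  have "C (\<lambda>x u. g (A (br x a) c) u) = C (\<lambda>x u. g (A (br (Q x) a) c) (Q u))"
    using decF[OF lin] by simp
  also have "\<dots> = - (\<Sum>b\<in>Zb. g b b * g (A b a) (A b c))" by (simp only: pw C_neg C_sum C_scale r1)
  also have "\<dots> = - (\<Sum>b\<in>Zb. g b b * \<phi> b * g (Q a) c)"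
    by (simp add: gA2 mult.assoc cong: sum.cong)
  finally show ?thesis by (simp add: \<xi>_def sum_distrib_right)
qed

definition "\<tau> y w = C (\<lambda>x u. g (A y (A w x)) u)"

lemma Rf_g: "g (Rf x y w) u =
  - (1/4) * g (A (br y w) x) u - (1/4) * g (br x (A y w)) u + (1/4) * g (A x (A y w)) u
  - (1/4) * g (br x (A w y)) u + (1/4) * g (A x (A w y)) u
  + (1/4) * g (A (br x w) y) u + (1/4) * g (br y (A x w)) u - (1/4) * g (A y (A x w)) u
  + (1/4) * g (br y (A w x)) u - (1/4) * g (A y (A w x)) u + (1/2) * g (A (br x y) w) u"
  by (simp add: Rf_def)

lemma ricci_eq: "ricci br g y w = - (1/2) * \<xi> * g (Q y) w - (1/4) * \<tau> y w"
proof -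
  have "ricci br g y w = C (\<lambda>x u. g (Rf x y w) u)"
    unfolding ricci_def C_trace curv ..
  also have "\<dots> = - (1/4) * 0 - (1/4) * 0 + (1/4) * 0 - (1/4) * 0 + (1/4) * 0
     + (1/4) * (- \<xi> * g (Q w) y) + (1/4) * (\<xi> * g (Q y) w) - (1/4) * 0 + (1/4) * 0
     - (1/4) * \<tau> y w + (1/2) * (- \<xi> * g (Q y) w)"
    unfolding Rf_g
    by (simp only: C_add C_diff C_scale T1 T3 T5 T6 T7 T8 T10 \<tau>_def[symmetric])
  finally show ?thesis by (simp add: gQ_sym[of w y] algebra_simps)
qed



lemma tau_simps[simp]:
  "\<tau> y (w1 + w2) = \<tau> y w1 + \<tau> y w2" "\<tau> y (c *\<^sub>R w) = c * \<tau> y w"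
  "\<tau> (y1 + y2) w = \<tau> y1 w + \<tau> y2 w" "\<tau> (c *\<^sub>R y) w = c * \<tau> y w"
  by (simp_all add: \<tau>_def)

lemma ric_lin: "linear (ricci br g y)"
  by (rule linearI) (simp_all add: ricci_eq algebra_simps)

lemma riesz: "linear F \<Longrightarrow> \<exists>u. \<forall>w. g u w = F w"
proof -
  assume F: "linear F"
  have "g (\<Sum>k\<in>UNIV. F (axis k 1) *\<^sub>R d k) w = F w" for w
  proof -
    have "g (\<Sum>k\<in>UNIV. F (axis k 1) *\<^sub>R d k) w = (\<Sum>k\<in>UNIV. w $ k * F (axis k 1))"
      by (simp add: g_d' mult.commute)
    also have "\<dots> = F (\<Sum>k\<in>UNIV. (w $ k) *\<^sub>R axis k 1)"
      by (simp add: linear_sum[OF F] linear_scale[OF F])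
    also have "\<dots> = F w" by (simp add: expand[symmetric])
    finally show ?thesis .
  qed
  then show ?thesis by blast
qed

lemma ricop: "g (ricci_operator br g y) w = ricci br g y w"
proof -
  have ex: "\<exists>!u. \<forall>w. g u w = ricci br g y w"
  proof -
    obtain u where u: "\<forall>w. g u w = ricci br g y w" using riesz[OF ric_lin] by blast
    moreover have "u' = u" if "\<forall>w. g u' w = ricci br g y w" for u'
    proof -
      have "u' - u = 0" by (rule g_nd) (simp add: u that)
      then show ?thesis by simp
    qed
    ultimately show ?thesis by blast
  qed
  show ?thesis unfolding ricci_operator_def using theI'[OF ex] by blast
qed

definition "trQ = C (\<lambda>x u. g (Q x) u)"

lemma trQ_val: "trQ = real CARD('n) - real (card Zb)"
proof -
  have e: "(\<lambda>x u. g (Q x) u) = (\<lambda>x u. g x u - g (P x) u)" by (intro ext) (simp add: Q_def)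
  have "trQ = C g - C (\<lambda>x u. g (P x) u)" unfolding trQ_def e by (rule C_diff)
  moreover have "C g = real CARD('n)" by (simp add: C_def g_axis_d)
  moreover have "C (\<lambda>x u. g (P x) u) = real (card Zb)"
  proof -
    have "(\<lambda>x u. g (P x) u) = (\<lambda>x u. \<Sum>b\<in>Zb. g b b * (g x b * g b u))"
      by (intro ext) (simp add: P_def mult.assoc)
    moreover have "C (\<lambda>x u. g x b * g b u) = g b b" for b by (rule C_rank1) (rule gr)
    ultimately have "C (\<lambda>x u. g (P x) u) = (\<Sum>b\<in>Zb. g b b * g b b)" by simp
    also have "\<dots> = (\<Sum>b\<in>Zb. 1)" by (rule sum.cong) simp_all
    finally show ?thesis by simp
  qed
  ultimately show ?thesis by simp
qed

lemma dimV: "real (dim V) = real CARD('n) - real (card Zb)"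
proof -
  have "dim {x + y |x y. x \<in> Z \<and> y \<in> V} + dim (Z \<inter> V) = dim Z + dim V"
    by (rule dim_sums_Int[OF Z_sub V_sub])
  moreover have "{x + y |x y. x \<in> Z \<and> y \<in> V} = UNIV"
  proof -
    have "x \<in> {x + y |x y. x \<in> Z \<and> y \<in> V}" for x
      unfolding mem_Collect_eq by (rule exI[of _ "P x"], rule exI[of _ "Q x"]) (simp add: PQ)
    then show ?thesis by blast
  qed
  moreover have "Z \<inter> V = {0}"
  proof -
    have "z = 0" if "z \<in> Z" "z \<in> V" for z
      using Z_nd that(1) gVZ[OF that(2)] unfolding nondegenerate_on_def by blast
    moreover have "(0::real^'n) \<in> Z \<inter> V" using Z_sub V_sub by (simp add: subspace_0)
    ultimately show ?thesis by blast
  qed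
  moreover have "dim Z = card Zb" using Zb_span dim_span_eq_card_independent[OF Zb_ind] by simp
  moreover have "dim (UNIV :: (real^'n) set) = CARD('n)" by simp
  moreover have "dim {0::real^'n} = 0" by simp
  ultimately show ?thesis by simp
qed

lemma C_tau: "C \<tau> = - \<xi> * trQ"
proof -
  have bil: "bilinear \<tau>" by (rule bilI) simp_all
  have q: "(\<lambda>x u. \<tau> (Q x) (Q u)) = (\<lambda>x u. 0)" by (intro ext) (simp add: \<tau>_def)
  have bb: "\<tau> b b = - \<phi> b * trQ" if "b \<in> Zb" for b
    using that by (simp add: \<tau>_def A_sq trQ_def)
  have "C \<tau> = (\<Sum>b\<in>Zb. g b b * \<tau> b b)" using C_decomp[OF bil] q by simp
  also have "\<dots> = (\<Sum>b\<in>Zb. - (g b b * \<phi> b * trQ))" by (rule sum.cong) (simp_all add: bb)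
  finally show ?thesis by (simp add: \<xi>_def sum_negf sum_distrib_right)
qed

lemma scalar: "scalar_curvature br g = - real (dim V) * (\<Sum>z\<in>Zb. g z z * \<phi> z) / 4"
proof -
  have "scalar_curvature br g = C (\<lambda>y w. ricci br g y w)"
    unfolding scalar_curvature_def C_trace ricop ..
  also have "\<dots> = C (\<lambda>y w. - (1/2) * \<xi> * g (Q y) w - (1/4) * \<tau> y w)"
    by (simp add: ricci_eq)
  also have "\<dots> = - (1/2) * \<xi> * trQ - (1/4) * C \<tau>"
    by (simp only: C_diff C_scale trQ_def)
  also have "\<dots> = - trQ * \<xi> / 4" by (simp add: C_tau)
  finally show ?thesis by (simp add: trQ_val dimV[symmetric] \<xi>_def)
qed


end

theorem theorem3p6:
  fixes br :: "real^'n \<Rightarrow> real^'n \<Rightarrow> real^'n"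
    and g :: "real^'n \<Rightarrow> real^'n \<Rightarrow> real"
    and \<phi> :: "real^'n \<Rightarrow> real"
    and Zb :: "(real^'n) set"
  assumes "modified_H_type br g \<phi>"
    and "pseudo_orthonormal_basis g (lie_center br) Zb"
  shows "scalar_curvature br g =
           - real (dim (orth_compl g (lie_center br))) * (\<Sum>z\<in>Zb. g z z * \<phi> z) / 4"
proof -
  obtain j where hj: "\<forall>z\<in>lie_center br.
          (\<forall>x\<in>orth_compl g (lie_center br). j z x \<in> orth_compl g (lie_center br)) \<and>
          (\<forall>x\<in>orth_compl g (lie_center br). \<forall>y\<in>orth_compl g (lie_center br).
              g (br x y) z = g y (j z x)) \<and>
          (\<forall>x\<in>orth_compl g (lie_center br). j z (j z x) = - (\<phi> z) *\<^sub>R x)"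
    using assms(1) unfolding modified_H_type_def by blast
  have tsn: "two_step_nilpotent br" and pm: "pseudo_metric g"
    and nd: "nondegenerate_on g (lie_center br)"
    using assms(1) unfolding modified_H_type_def by blast+
  have "mht br g \<phi> Zb j"
    unfolding mht_def
    using tsn pm nd hj assms(2)
    unfolding two_step_nilpotent_def lie_algebra_def pseudo_metric_def pseudo_orthonormal_basis_def
    by blast
  then show ?thesis by (rule mht.scalar)
qed

end
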